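(* Let $A:[0,T]\to\mathbb{C}^{m\times m}$ be continuous, $\|\cdot\|$ a submultiplicative matrix norm, and let $F_n,A_n$ be the Fer sequence: $A_0=A$, $F_{n+1}(t)=\int_0^tA_n(s)ds$, $A_{n+1}=e^{-F_{n+1}}A_ne^{F_{n+1}}-\int_0^1e^{-xF_{n+1}}A_ne^{xF_{n+1}}dx$. Let $M(K)=\int_0^K\frac{1-e^{2x}(1-2x)}{2x}dx$ and let $\xi\approx0.8604065$ be the smallest positive fixed point of $M$. Then for all $n\ge0$ and $t\in[0,T]$, $\int_0^t\|A_n(s)\|ds\le M^{n}\big(\int_0^t\|A(s)\|ds\big)$ (with $M^n$ the $n$-fold iterate), hence $\|F_{n+1}(t)\|\le M^n\big(\int_0^t\|A(s)\|ds\big)$; and if $\int_0^t\|A(s)\|ds<\xi$, then $M^n\big(\int_0^t\|A(s)\|ds\big)\to0$, so $F_n(t)\to0$ as $n\to\infty$ (the Fer expansion converges). *)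

theory Defs
  imports "HOL-Analysis.Analysis"
begin

text \<open>Complex m x m matrices are modelled as complex^'m^'m (with the standard
 Euclidean topology; all norms on this finite-dimensional space are equivalent).\<close>

type_synonym 'm cmat = "complex ^ 'm ^ 'm"

primrec mat_pow :: "'m::finite cmat \<Rightarrow> nat \<Rightarrow> 'm cmat" where
  "mat_pow X 0 = mat 1"
| "mat_pow X (Suc k) = X ** mat_pow X k"

definition mexp :: "'m::finite cmat \<Rightarrow> 'm cmat" where
  "mexp X = (\<Sum>k. (1 / fact k) *\<^sub>R mat_pow X k)"

definition mscale :: "complex \<Rightarrow> 'm::finite cmat \<Rightarrow> 'm cmat" where
  "mscale c X = (\<chi> i j. c * X $ i $ j)"

definition submult_matrix_norm :: "('m::finite cmat \<Rightarrow> real) \<Rightarrow> bool" where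
  "submult_matrix_norm N \<longleftrightarrow>
     (\<forall>X. N X = 0 \<longleftrightarrow> X = 0) \<and>
     (\<forall>X. 0 \<le> N X) \<and>
     (\<forall>X Y. N (X + Y) \<le> N X + N Y) \<and>
     (\<forall>c X. N (mscale c X) = cmod c * N X) \<and>
     (\<forall>X Y. N (X ** Y) \<le> N X * N Y)"

text \<open>The Fer sequence: fer_A A n = A_n, fer_F A n = F_n (F_0 := 0, unused in the paper).\<close>
primrec fer_A :: "(real \<Rightarrow> 'm::finite cmat) \<Rightarrow> nat \<Rightarrow> real \<Rightarrow> 'm cmat" where
  "fer_A A 0 = A"
| "fer_A A (Suc n) = (\<lambda>t. let F = integral {0..t} (fer_A A n) in
      mexp (- F) ** fer_A A n t ** mexp F
      - integral {0..1} (\<lambda>x. mexp (- (x *\<^sub>R F)) ** fer_A A n t ** mexp (x *\<^sub>R F)))"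

fun fer_F :: "(real \<Rightarrow> 'm::finite cmat) \<Rightarrow> nat \<Rightarrow> real \<Rightarrow> 'm cmat" where
  "fer_F A 0 = (\<lambda>t. 0)"
| "fer_F A (Suc n) = (\<lambda>t. integral {0..t} (fer_A A n))"

definition fer_M :: "real \<Rightarrow> real" where
  "fer_M K = integral {0..K} (\<lambda>x. (1 - exp (2 * x) * (1 - 2 * x)) / (2 * x))"

definition fer_xi :: real where
  "fer_xi = Inf {K. 0 < K \<and> fer_M K = K}"

end

theory Submission
  imports Defs
begin
lemma lin_mmL: "linear (\<lambda>Y. (X::'m::finite cmat) ** (Y::'m cmat))"
  by (rule linearI) (simp_all add: matrix_add_ldistrib matrix_scalar_ac scalar_matrix_assoc)

lemma matrix_add_rdistrib': "((B + C) ** (A::'m::finite cmat)) = (B ** A) + (C ** A)"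
  by (vector matrix_matrix_mult_def sum.distrib[symmetric] field_simps)

lemma lin_mmR: "linear (\<lambda>X. (X::'m::finite cmat) ** (Y::'m cmat))"
  by (rule linearI) (rule matrix_add_rdistrib', simp add: scalar_matrix_assoc)

lemma bil_mm: "bilinear (\<lambda>X Y. (X::'m::finite cmat) ** (Y::'m cmat))"
  unfolding bilinear_def using lin_mmL lin_mmR by blast

lemma bbil_mm: "bounded_bilinear (\<lambda>X Y. (X::'m::finite cmat) ** (Y::'m cmat))"
  using bil_mm bilinear_conv_bounded_bilinear by blast

lemma bl_mmL: "bounded_linear (\<lambda>Y. (X::'m::finite cmat) ** (Y::'m cmat))"
  using lin_mmL linear_conv_bounded_linear by blast

lemma bl_mmR: "bounded_linear (\<lambda>X. (X::'m::finite cmat) ** (Y::'m cmat))"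
  using lin_mmR linear_conv_bounded_linear by blast

typedef (overloaded) 'm mM = "UNIV :: ('m::finite cmat) set" morphisms Rep_mM Abs_mM by auto
setup_lifting type_definition_mM

instantiation mM :: (finite) real_vector begin
lift_definition zero_mM :: "'a mM" is 0 .
lift_definition plus_mM :: "'a mM \<Rightarrow> 'a mM \<Rightarrow> 'a mM" is "(+)" .
lift_definition minus_mM :: "'a mM \<Rightarrow> 'a mM \<Rightarrow> 'a mM" is "(-)" .
lift_definition uminus_mM :: "'a mM \<Rightarrow> 'a mM" is "uminus" .
lift_definition scaleR_mM :: "real \<Rightarrow> 'a mM \<Rightarrow> 'a mM" is "scaleR" .
instance by standard (transfer; simp add: algebra_simps scaleR_add_right scaleR_add_left)+
end

instantiation mM :: (finite) ring_1 begin
lift_definition one_mM :: "'a mM" is "mat 1" .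
lift_definition times_mM :: "'a mM \<Rightarrow> 'a mM \<Rightarrow> 'a mM" is "(**)" .
instance
proof
  fix a b c :: "'a mM"
  show "a * b * c = a * (b * c)" by transfer (simp add: matrix_mul_assoc)
  show "1 * a = a" by transfer simp
  show "a * 1 = a" by transfer simp
  show "(a + b) * c = a * c + b * c" by transfer (simp add: matrix_add_rdistrib')
  show "a * (b + c) = a * b + a * c" by transfer (simp add: matrix_add_ldistrib)
  show "(0::'a mM) \<noteq> 1"
  proof transfer
    obtain i :: 'a where True by blast
    show "(0::'a cmat) \<noteq> mat 1"
    proof
      assume "(0::'a cmat) = mat 1"
      hence "(0::'a cmat) $ i $ i = mat 1 $ i $ i" by simp
      thus False by (simp add: mat_def)
    qed
  qed
qed
end

lemma Rep_mM_mult: "Rep_mM (x * y) = Rep_mM x ** Rep_mM y" by transfer simp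
lemma Rep_mM_one: "Rep_mM 1 = mat 1" by transfer simp

instantiation mM :: (finite) real_normed_algebra_1 begin
definition norm_mM :: "'a mM \<Rightarrow> real" where "norm_mM x = onorm (\<lambda>Y::'a cmat. Rep_mM x ** Y)"
definition sgn_mM :: "'a mM \<Rightarrow> 'a mM" where "sgn_mM x = x /\<^sub>R norm x"
definition dist_mM :: "'a mM \<Rightarrow> 'a mM \<Rightarrow> real" where "dist_mM x y = norm (x - y)"
definition uniformity_mM :: "('a mM \<times> 'a mM) filter" where
  "uniformity_mM = (INF e\<in>{0<..}. principal {(x, y). dist x y < e})"
definition open_mM :: "'a mM set \<Rightarrow> bool" where
  "open_mM U = (\<forall>x\<in>U. \<forall>\<^sub>F (x', y) in uniformity. x' = x \<longrightarrow> y \<in> U)"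
instance
proof
  fix x y :: "'a mM" and a :: real and U :: "'a mM set"
  show "dist x y = norm (x - y)" by (simp add: dist_mM_def)
  show "sgn x = x /\<^sub>R norm x" by (simp add: sgn_mM_def)
  show "(uniformity :: ('a mM \<times> 'a mM) filter) = (INF e\<in>{0<..}. principal {(x, y). dist x y < e})"
    by (simp add: uniformity_mM_def)
  show "open U = (\<forall>x\<in>U. \<forall>\<^sub>F (x', y) in uniformity. x' = x \<longrightarrow> y \<in> U)"
    by (simp add: open_mM_def)
  show "(norm x = 0) = (x = 0)"
  proof -
    have "norm x = 0 \<longleftrightarrow> (\<forall>Y::'a cmat. Rep_mM x ** Y = 0)"
      unfolding norm_mM_def by (rule onorm_eq_0[OF bl_mmL])
    also have "\<dots> \<longleftrightarrow> Rep_mM x = 0"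
      by (metis matrix_mul_rid times0_left)
    also have "\<dots> \<longleftrightarrow> x = 0"
      by (metis Rep_mM_inverse zero_mM.rep_eq)
    finally show ?thesis .
  qed
  show "norm (x + y) \<le> norm x + norm y"
    unfolding norm_mM_def plus_mM.rep_eq matrix_add_rdistrib'
    by (rule onorm_triangle[OF bl_mmL bl_mmL])
  show "norm (a *\<^sub>R x) = \<bar>a\<bar> * norm x"
    unfolding norm_mM_def scaleR_mM.rep_eq scalar_matrix_assoc[symmetric]
    by (rule onorm_scaleR[OF bl_mmL])
  show "a *\<^sub>R x * y = a *\<^sub>R (x * y)" by transfer (simp add: scalar_matrix_assoc)
  show "x * a *\<^sub>R y = a *\<^sub>R (x * y)" by transfer (simp add: matrix_scalar_ac scalar_matrix_assoc)
  show "norm (x * y) \<le> norm x * norm y"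
  proof -
    have "(\<lambda>Y::'a cmat. Rep_mM (x*y) ** Y) = (\<lambda>Y. Rep_mM x ** Y) \<circ> (\<lambda>Y. Rep_mM y ** Y)"
      by (auto simp: Rep_mM_mult matrix_mul_assoc)
    thus ?thesis unfolding norm_mM_def using onorm_compose[OF bl_mmL bl_mmL] by metis
  qed
  show "norm (1::'a mM) = 1"
    unfolding norm_mM_def Rep_mM_one matrix_mul_lid by (rule onorm_id)
qed
end

lemma norm_Rep_mM_le: "norm (Rep_mM x) \<le> norm (mat 1 :: 'm::finite cmat) * norm (x::'m mM)"
proof -
  have "norm (Rep_mM x ** (mat 1 :: 'm cmat)) \<le> onorm (\<lambda>Y::'m cmat. Rep_mM x ** Y) * norm (mat 1 :: 'm cmat)"
    by (rule onorm[OF bl_mmL])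
  thus ?thesis by (simp add: norm_mM_def mult.commute)
qed

lemma norm_mM_le_Rep: "\<exists>K. \<forall>x::'m::finite mM. norm x \<le> K * norm (Rep_mM x)"
proof -
  obtain K where K: "\<And>(a::'m cmat) (b::'m cmat). norm (a ** b) \<le> norm a * norm b * K"
    using bounded_bilinear.bounded[OF bbil_mm] by blast
  have "norm x \<le> K * norm (Rep_mM x)" for x :: "'m mM"
    unfolding norm_mM_def by (rule onorm_le) (metis K mult.commute mult.left_commute)
  thus ?thesis by blast
qed

lemma bl_Rep_mM: "bounded_linear (Rep_mM :: 'm::finite mM \<Rightarrow> 'm cmat)"
  by (rule bounded_linear_intro[where K="norm (mat 1 :: 'm cmat)"])
     (auto simp: plus_mM.rep_eq scaleR_mM.rep_eq, metis norm_Rep_mM_le mult.commute)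

lemma bl_Abs_mM: "bounded_linear (Abs_mM :: 'm::finite cmat \<Rightarrow> 'm mM)"
proof -
  obtain K where K: "\<And>x::'m mM. norm x \<le> K * norm (Rep_mM x)" using norm_mM_le_Rep by blast
  show ?thesis
    by (rule bounded_linear_intro[where K=K])
      (auto simp: plus_mM.abs_eq scaleR_mM.abs_eq eq_onp_def mult.commute
          intro: order_trans[OF K[of "Abs_mM _"]] simp: Abs_mM_inverse)
qed

instance mM :: (finite) banach
proof
  fix X :: "nat \<Rightarrow> 'a mM"
  assume "Cauchy X"
  hence "Cauchy (\<lambda>n. Rep_mM (X n))" by (rule bounded_linear.Cauchy[OF bl_Rep_mM])
  then obtain L where "(\<lambda>n. Rep_mM (X n)) \<longlonglongrightarrow> L" using Cauchy_convergent_iff convergent_def by blast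
  hence "(\<lambda>n. Abs_mM (Rep_mM (X n))) \<longlonglongrightarrow> Abs_mM L" by (rule bounded_linear.tendsto[OF bl_Abs_mM])
  thus "convergent X" by (auto simp: Rep_mM_inverse convergent_def)
qed

lemma isCont_exp_gen: "isCont (exp :: 'a::{real_normed_algebra_1,banach} \<Rightarrow> 'a) x"
proof -
  define R where "R = norm x + 1"
  have ul: "uniform_limit (ball 0 R) (\<lambda>n (y::'a). \<Sum>i<n. y ^ i /\<^sub>R fact i) (\<lambda>y. \<Sum>i. y ^ i /\<^sub>R fact i) sequentially"
  proof (rule Weierstrass_m_test[where f="\<lambda>i y. y ^ i /\<^sub>R fact i" and M="\<lambda>i. R ^ i / fact i"])
    show "summable (\<lambda>i. R ^ i / fact i)" using summable_exp_generic[of R] by (simp add: divide_inverse_commute)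
    fix n and y :: 'a assume "y \<in> ball 0 R"
    hence "norm y \<le> R" by auto
    have "norm (y ^ n /\<^sub>R fact n) = norm (y ^ n) / fact n" by (simp add: divide_inverse_commute)
    also have "\<dots> \<le> norm y ^ n / fact n"
      by (intro divide_right_mono norm_power_ineq) auto
    also have "\<dots> \<le> R ^ n / fact n"
      by (intro divide_right_mono power_mono) (auto simp: \<open>norm y \<le> R\<close>)
    finally show "norm (y ^ n /\<^sub>R fact n) \<le> R ^ n / fact n" .
  qed
  have "continuous_on (ball 0 R) (\<lambda>y::'a. \<Sum>i. y ^ i /\<^sub>R fact i)"
    by (rule uniform_limit_theorem[OF _ ul]) (auto intro!: always_eventually continuous_intros)
  hence "continuous_on (ball 0 R) (exp :: 'a \<Rightarrow> 'a)" by (simp add: exp_def)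
  moreover have "x \<in> ball 0 R" by (simp add: R_def)
  ultimately show ?thesis using continuous_on_eq_continuous_at open_ball by blast
qed

lemma continuous_on_exp_gen[continuous_intros]:
  "continuous_on S f \<Longrightarrow> continuous_on S (\<lambda>x. exp (f x :: 'a::{real_normed_algebra_1,banach}))"
  using continuous_on_compose2[OF continuous_at_imp_continuous_on[of UNIV exp] _ subset_UNIV]
    isCont_exp_gen by blast

lemma Rep_mM_power: "Rep_mM ((Abs_mM X) ^ k) = mat_pow X k"
  by (induction k) (simp_all add: Rep_mM_one Rep_mM_mult Abs_mM_inverse)

lemma mexp_Rep: "mexp X = Rep_mM (exp (Abs_mM X))"
proof -
  have "Rep_mM (exp (Abs_mM X)) = (\<Sum>n. Rep_mM (Abs_mM X ^ n /\<^sub>R fact n))"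
    unfolding exp_def by (rule bounded_linear.suminf[OF bl_Rep_mM summable_exp_generic])
  also have "\<dots> = mexp X"
    by (simp add: mexp_def scaleR_mM.rep_eq Rep_mM_power inverse_eq_divide)
  finally show ?thesis by simp
qed

lemma continuous_mexp[continuous_intros]:
  "continuous_on S f \<Longrightarrow> continuous_on S (\<lambda>x. mexp (f x))"
  unfolding mexp_Rep
  by (intro continuous_on_compose2[OF linear_continuous_on[OF bl_Rep_mM] _ subset_UNIV]
      continuous_on_exp_gen continuous_on_compose2[OF linear_continuous_on[OF bl_Abs_mM] _ subset_UNIV])

lemma psi_M_deriv:
  fixes a b :: "'a::{real_normed_algebra_1,banach}"
  shows "((\<lambda>x. exp (x *\<^sub>R (-a)) * b * exp (x *\<^sub>R a)) has_vector_derivative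
     (exp (x *\<^sub>R (-a)) * b * exp (x *\<^sub>R a)) * a - a * (exp (x *\<^sub>R (-a)) * b * exp (x *\<^sub>R a))) (at x within S)"
proof -
  have d: "((\<lambda>x. exp (x *\<^sub>R (-a)) * b * exp (x *\<^sub>R a)) has_vector_derivative
     (exp (x *\<^sub>R (-a)) * b) * (exp (x *\<^sub>R a) * a) + (exp (x *\<^sub>R (-a)) * (-a) * b) * exp (x *\<^sub>R a)) (at x within S)"
    by (intro has_vector_derivative_mult has_vector_derivative_mult_left exp_scaleR_has_vector_derivative_right)
  have "exp (x *\<^sub>R (-a)) * (-a) = (-a) * exp (x *\<^sub>R (-a))" by (rule exp_times_scaleR_commute)
  hence "(exp (x *\<^sub>R (-a)) * b) * (exp (x *\<^sub>R a) * a) + (exp (x *\<^sub>R (-a)) * (-a) * b) * exp (x *\<^sub>R a)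
     = (exp (x *\<^sub>R (-a)) * b * exp (x *\<^sub>R a)) * a - a * (exp (x *\<^sub>R (-a)) * b * exp (x *\<^sub>R a))"
    by (simp add: algebra_simps)
  with d show ?thesis by simp
qed

lemma Abs_mM_neg_scale: "Abs_mM (- (x *\<^sub>R F)) = x *\<^sub>R (- Abs_mM F)"
  by (simp add: uminus_mM.abs_eq scaleR_mM.abs_eq eq_onp_def)

lemma psi_deriv:
  fixes F Y :: "'m::finite cmat"
  shows "((\<lambda>x. mexp (- (x *\<^sub>R F)) ** Y ** mexp (x *\<^sub>R F)) has_vector_derivative
     (mexp (- (x *\<^sub>R F)) ** Y ** mexp (x *\<^sub>R F)) ** F - F ** (mexp (- (x *\<^sub>R F)) ** Y ** mexp (x *\<^sub>R F))) (at x within S)"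
proof -
  define a where "a = Abs_mM F"
  define b where "b = Abs_mM Y"
  have F: "F = Rep_mM a" and Y: "Y = Rep_mM b" by (simp_all add: a_def b_def Abs_mM_inverse)
  have eq: "mexp (- (x *\<^sub>R F)) ** Y ** mexp (x *\<^sub>R F) = Rep_mM (exp (x *\<^sub>R (-a)) * b * exp (x *\<^sub>R a))" for x
    by (simp add: mexp_Rep Rep_mM_mult Abs_mM_neg_scale a_def scaleR_mM.abs_eq eq_onp_def Y[symmetric])
  show ?thesis
    unfolding eq
    using bounded_linear.has_vector_derivative[OF bl_Rep_mM psi_M_deriv[of a b x S]]
    by (simp add: Rep_mM_mult minus_mM.rep_eq F)
qed

context
  fixes N :: "'m::finite cmat \<Rightarrow> real"
  assumes SN: "submult_matrix_norm N"
begin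

lemma N_nonneg: "0 \<le> N X" using SN unfolding submult_matrix_norm_def by blast
lemma N_zero_iff: "N X = 0 \<longleftrightarrow> X = 0" using SN unfolding submult_matrix_norm_def by blast
lemma N_0[simp]: "N 0 = 0" using N_zero_iff by blast
lemma N_triangle: "N (X + Y) \<le> N X + N Y" using SN unfolding submult_matrix_norm_def by blast
lemma N_mscale: "N (mscale c X) = cmod c * N X" using SN unfolding submult_matrix_norm_def by blast
lemma N_mult: "N (X ** Y) \<le> N X * N Y" using SN unfolding submult_matrix_norm_def by blast

lemma N_scaleR: "N (r *\<^sub>R X) = \<bar>r\<bar> * N X"
proof -
  have "r *\<^sub>R X = mscale (complex_of_real r) X"
    by (simp add: mscale_def vec_eq_iff scaleR_conv_of_real[where 'a=complex])
  thus ?thesis by (simp add: N_mscale)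
qed

lemma N_uminus: "N (- X) = N X"
  using N_scaleR[of "-1" X] by simp

lemma N_diff_commute: "N (X - Y) = N (Y - X)"
  using N_uminus[of "X - Y"] by simp

lemma N_triangle_diff: "N (X - Y) \<le> N X + N Y"
  using N_triangle[of X "- Y"] N_uminus[of Y] by simp

lemma N_sum: "N (sum f S) \<le> (\<Sum>i\<in>S. N (f i))"
proof (induction S rule: infinite_finite_induct)
  case (insert x F)
  thus ?case using N_triangle[of "f x" "sum f F"] by simp
qed simp_all

lemma N_le_norm: "\<exists>C\<ge>0. \<forall>X. N X \<le> C * norm X"
proof (intro exI[of _ "\<Sum>b\<in>Basis. N b"] conjI allI)
  show "0 \<le> (\<Sum>b\<in>(Basis::'m cmat set). N b)" by (intro sum_nonneg N_nonneg)
  fix X :: "'m cmat"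
  have "N X = N (\<Sum>b\<in>Basis. (X \<bullet> b) *\<^sub>R b)" by (simp add: euclidean_representation)
  also have "\<dots> \<le> (\<Sum>b\<in>Basis. N ((X \<bullet> b) *\<^sub>R b))" by (rule N_sum)
  also have "\<dots> \<le> (\<Sum>b\<in>Basis. norm X * N b)"
    by (intro sum_mono) (auto simp: N_scaleR intro!: mult_right_mono Basis_le_norm N_nonneg)
  finally show "N X \<le> (\<Sum>b\<in>Basis. N b) * norm X" by (simp add: sum_distrib_left mult.commute)
qed

lemma N_cont: "continuous_on S N"
proof -
  obtain C where C: "C \<ge> 0" "\<And>X. N X \<le> C * norm X" using N_le_norm by blast
  have L: "\<bar>N X - N Y\<bar> \<le> C * dist X Y" for X Y
  proof -
    have "N X \<le> N Y + N (X - Y)" using N_triangle[of Y "X - Y"] by simp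
    moreover have "N Y \<le> N X + N (Y - X)" using N_triangle[of X "Y - X"] by simp
    ultimately show ?thesis using C(2)[of "X - Y"] C(2)[of "Y - X"] N_diff_commute[of X Y]
      by (auto simp: dist_norm)
  qed
  show ?thesis
    unfolding continuous_on_iff
  proof (intro ballI allI impI)
    fix x e assume "x \<in> S" "(0::real) < e"
    show "\<exists>d>0. \<forall>x'\<in>S. dist x' x < d \<longrightarrow> dist (N x') (N x) < e"
    proof (intro exI[of _ "e / (C + 1)"] conjI ballI impI)
      show "0 < e / (C + 1)" using \<open>0 < e\<close> C by simp
      fix y assume "y \<in> S" "dist y x < e / (C + 1)"
      hence "(C + 1) * dist y x < e" using C by (simp add: field_simps)
      moreover have "C * dist y x \<le> (C + 1) * dist y x" by (simp add: distrib_right)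
      ultimately show "dist (N y) (N x) < e" using L[of y x] by (simp add: dist_real_def)
    qed
  qed
qed

lemma N_ge_norm: "\<exists>c>0. \<forall>X. c * norm X \<le> N X"
proof -
  have "sphere (0::'m cmat) 1 \<noteq> {}"
    using vector_choose_size[of 1] by (auto simp: sphere_def dist_norm)
  then obtain X0 where X0: "X0 \<in> sphere 0 1" "\<And>Y. Y \<in> sphere 0 1 \<Longrightarrow> N X0 \<le> N Y"
    using continuous_attains_inf[OF compact_sphere _ N_cont] by blast
  have "X0 \<noteq> 0" using X0 by auto
  hence c: "N X0 > 0" using N_nonneg[of X0] N_zero_iff[of X0] by linarith
  have "N X0 * norm X \<le> N X" for X
  proof (cases "X = 0")
    case False
    hence "(1 / norm X) *\<^sub>R X \<in> sphere 0 1" by (simp add: sphere_def dist_norm)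
    hence "N X0 \<le> N ((1 / norm X) *\<^sub>R X)" by (rule X0(2))
    thus ?thesis using False by (simp add: N_scaleR field_simps)
  qed simp
  with c show ?thesis by blast
qed

lemma N_integral:
  fixes f :: "'n::euclidean_space \<Rightarrow> 'm cmat"
  assumes fi: "f integrable_on S" and gi: "(\<lambda>x. N (f x)) integrable_on S"
  shows "N (integral S f) \<le> integral S (\<lambda>x. N (f x))"
proof (rule ccontr)
  define I where "I = integral S f"
  define r where "r = integral S (\<lambda>x. N (f x))"
  assume "\<not> N (integral S f) \<le> integral S (\<lambda>x. N (f x))"
  hence lt: "r < N I" by (simp add: I_def r_def)
  have r0: "0 \<le> r" unfolding r_def by (rule integral_nonneg[OF gi N_nonneg])
  define r' where "r' = (r + N I) / 2"
  have r': "r < r'" "r' < N I" "0 < r'" using lt r0 by (auto simp: r'_def)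
  define C where "C = {Y. N Y \<le> r'}"
  have "convex C"
    unfolding C_def convex_def
  proof (intro allI impI ballI, clarsimp)
    fix x y :: "'m cmat" and u v :: real
    assume "N x \<le> r'" "N y \<le> r'" "0 \<le> u" "0 \<le> v" "u + v = 1"
    have "N (u *\<^sub>R x + v *\<^sub>R y) \<le> u * N x + v * N y"
      using N_triangle[of "u *\<^sub>R x" "v *\<^sub>R y"] \<open>0 \<le> u\<close> \<open>0 \<le> v\<close> by (simp add: N_scaleR)
    also have "\<dots> \<le> u * r' + v * r'"
      by (intro add_mono mult_left_mono) (use \<open>N x \<le> r'\<close> \<open>N y \<le> r'\<close> \<open>0 \<le> u\<close> \<open>0 \<le> v\<close> in auto)
    finally show "N (u *\<^sub>R x + v *\<^sub>R y) \<le> r'" using \<open>u + v = 1\<close> by (simp add: distrib_right[symmetric])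
  qed
  moreover have "closed C" unfolding C_def by (rule closed_Collect_le[OF N_cont continuous_on_const])
  moreover have "I \<notin> C" using r' by (simp add: C_def)
  ultimately have "\<exists>a b. inner a I < b \<and> (\<forall>x\<in>C. inner a x > b)"
    by (rule separating_hyperplane_closed_point)
  then obtain a b where ab: "inner a I < b" "\<And>x. x \<in> C \<Longrightarrow> inner a x > b"
    by blast
  define l where "l = - a"
  define \<beta> where "\<beta> = - b"
  have lI: "inner l I > \<beta>" using ab(1) by (simp add: l_def \<beta>_def)
  have lC: "inner l Y < \<beta>" if "Y \<in> C" for Y using ab(2)[OF that] by (simp add: l_def \<beta>_def)
  have \<beta>0: "0 < \<beta>" using lC[of 0] r' by (simp add: C_def)
  have bnd: "inner l Y \<le> (\<beta> / r') * N Y" for Y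
  proof (cases "Y = 0")
    case False
    hence NY: "N Y > 0" using N_nonneg[of Y] N_zero_iff[of Y] by linarith
    have "(r' / N Y) *\<^sub>R Y \<in> C" using NY r' by (simp add: C_def N_scaleR)
    hence "inner l ((r' / N Y) *\<^sub>R Y) < \<beta>" by (rule lC)
    hence "(r' / N Y) * inner l Y < \<beta>" by simp
    hence "r' * inner l Y < \<beta> * N Y" using NY by (simp add: field_simps)
    thus ?thesis using r' by (simp add: field_simps)
  qed simp
  have "inner l I = integral S (\<lambda>x. inner l (f x))"
    unfolding I_def using integral_linear[OF fi bounded_linear_inner_right[of l]] by (simp add: o_def)
  also have "\<dots> \<le> integral S (\<lambda>x. (\<beta> / r') * N (f x))"
  proof (rule integral_le)
    show "(\<lambda>x. (\<beta> / r') * N (f x)) integrable_on S"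
      using integrable_cmul[OF gi, of "\<beta> / r'"] by simp
    show "(\<lambda>x. inner l (f x)) integrable_on S"
      using integrable_linear[OF fi bounded_linear_inner_right[of l]] by (simp add: o_def)
  qed (rule bnd)
  also have "\<dots> = (\<beta> / r') * r" by (simp add: r_def)
  also have "\<dots> \<le> \<beta>" using r' \<beta>0 by (simp add: field_simps)
  finally show False using lI by simp
qed

end

definition ff :: "real \<Rightarrow> real" where "ff x = (1 - exp (2 * x) * (1 - 2 * x)) / (2 * x)"

lemma fer_M_ff: "fer_M K = integral {0..K} ff"
  unfolding fer_M_def ff_def by simp

lemma isCont_ff: "isCont ff x"
proof (cases "x = 0")
  case True
  define g where "g = (\<lambda>x::real. 1 - exp (2 * x) * (1 - 2 * x))"
  have "(g has_real_derivative (- (exp (2 * 0) * 2 * (1 - 2 * 0) + exp (2 * 0) * (0 - 2 * 1)))) (at 0)"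
    unfolding g_def by (intro derivative_eq_intros) auto
  hence "(g has_real_derivative 0) (at 0)" by simp
  hence "((\<lambda>h. (g (0 + h) - g 0) / h) \<longlongrightarrow> 0) (at 0)" by (simp add: DERIV_def)
  hence "((\<lambda>h. (g h / h) / 2) \<longlongrightarrow> 0 / 2) (at 0)" by (intro tendsto_divide) (auto simp: g_def)
  moreover have "(\<lambda>h. (g h / h) / 2) = ff" by (auto simp: ff_def g_def fun_eq_iff)
  ultimately show ?thesis using True by (simp add: isCont_def ff_def)
next
  case False
  thus ?thesis unfolding ff_def by (intro continuous_intros) auto
qed

lemma continuous_on_ff: "continuous_on S ff"
  by (simp add: continuous_at_imp_continuous_on isCont_ff)

lemma ff_nonneg: "0 \<le> x \<Longrightarrow> 0 \<le> ff x"
proof -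
  assume x: "0 \<le> x"
  have "1 - 2 * x \<le> exp (- (2 * x))" using exp_ge_add_one_self[of "- (2 * x)"] by simp
  hence "exp (2 * x) * (1 - 2 * x) \<le> exp (2 * x) * exp (- (2 * x))" by (intro mult_left_mono) auto
  hence "exp (2 * x) * (1 - 2 * x) \<le> 1" by (simp add: exp_minus field_simps)
  thus ?thesis using x unfolding ff_def by (intro divide_nonneg_nonneg) auto
qed

lemma ff_small: "0 \<le> x \<Longrightarrow> x \<le> 1/8 \<Longrightarrow> ff x \<le> 3/4"
proof -
  assume x: "0 \<le> x" "x \<le> 1/8"
  show ?thesis
  proof (cases "x = 0")
    case True thus ?thesis by (simp add: ff_def)
  next
    case False
    hence xp: "0 < x" using x by simp
    have e1: "1 + 2 * x \<le> exp (2 * x)" using exp_ge_add_one_self[of "2 * x"] by simp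
    have "1 - 1/4 \<le> exp (- (1/4::real))" using exp_ge_add_one_self[of "- (1/4::real)"] by simp
    hence "exp (1/4::real) \<le> 4/3" by (simp add: exp_minus field_simps)
    moreover have "exp (2 * x) \<le> exp (1/4)" using x by simp
    ultimately have e2: "exp (2 * x) \<le> 4/3" by linarith
    have "1 - exp (2 * x) * (1 - 2 * x) \<le> 2 * x * (exp (2 * x) - 1)"
      using e1 by (simp add: algebra_simps)
    also have "\<dots> \<le> 2 * x * (3/4)" using e2 xp by (intro mult_left_mono) auto
    finally show ?thesis using xp unfolding ff_def by (simp add: field_simps)
  qed
qed

lemma ff_has_integral:
  assumes K: "0 \<le> K"
  shows "((\<lambda>x. 2 * K * x * exp (2 * K * x)) has_integral ff K) {0..1}"
proof (cases "K = 0")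
  case True
  have "(\<lambda>x::real. 2 * K * x * exp (2 * K * x)) = (\<lambda>x. 0)" using True by simp
  moreover have "ff K = 0" using True by (simp add: ff_def)
  ultimately show ?thesis using has_integral_0[of "{0..1::real}"] by simp
next
  case False
  hence Kp: "0 < K" using K by simp
  define G where "G = (\<lambda>x. x * exp (2 * K * x) - exp (2 * K * x) / (2 * K))"
  have "((\<lambda>x. 2 * K * x * exp (2 * K * x)) has_integral (G 1 - G 0)) {0..1}"
  proof (rule fundamental_theorem_of_calculus)
    fix x :: real assume "x \<in> {0..1}"
    have "(G has_real_derivative (1 * exp (2 * K * x) + x * (exp (2 * K * x) * (2 * K * 1))
        - exp (2 * K * x) * (2 * K * 1) / (2 * K))) (at x within {0..1})"
      unfolding G_def using Kp by (intro derivative_eq_intros) auto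
    moreover have "1 * exp (2 * K * x) + x * (exp (2 * K * x) * (2 * K * 1))
        - exp (2 * K * x) * (2 * K * 1) / (2 * K) = 2 * K * x * exp (2 * K * x)"
      using Kp by (simp add: field_simps)
    ultimately have "(G has_real_derivative 2 * K * x * exp (2 * K * x)) (at x within {0..1})"
      by metis
    thus "(G has_vector_derivative 2 * K * x * exp (2 * K * x)) (at x within {0..1})"
      by (simp only: has_real_derivative_iff_has_vector_derivative)
  qed simp
  moreover have "G 1 - G 0 = ff K"
    using Kp by (simp add: G_def ff_def field_simps)
  ultimately show ?thesis by simp
qed

lemma fer_M_0[simp]: "fer_M 0 = 0"
  by (simp add: fer_M_ff)

lemma fer_M_nonneg: "0 \<le> fer_M K"
proof (cases "0 \<le> K")
  case True thus ?thesis unfolding fer_M_ff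
    by (intro integral_nonneg integrable_continuous_interval continuous_on_ff ff_nonneg) auto
next
  case False thus ?thesis by (simp add: fer_M_ff)
qed

lemma fer_M_mono: "0 \<le> a \<Longrightarrow> a \<le> b \<Longrightarrow> fer_M a \<le> fer_M b"
proof -
  assume ab: "0 \<le> a" "a \<le> b"
  have i: "ff integrable_on {0..b}" by (intro integrable_continuous_interval continuous_on_ff)
  have "fer_M b = integral {0..a} ff + integral {a..b} ff"
    unfolding fer_M_ff using Henstock_Kurzweil_Integration.integral_combine[OF ab i] by simp
  moreover have "0 \<le> integral {a..b} ff"
    using ab by (intro integral_nonneg integrable_continuous_interval continuous_on_ff ff_nonneg) auto
  ultimately show ?thesis by (simp add: fer_M_ff)
qed

lemma fer_M_small: "0 \<le> K \<Longrightarrow> K \<le> 1/8 \<Longrightarrow> fer_M K \<le> 3/4 * K"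
proof -
  assume K: "0 \<le> K" "K \<le> 1/8"
  have "fer_M K \<le> integral {0..K} (\<lambda>x. 3/4 :: real)"
    unfolding fer_M_ff
    by (intro integral_le integrable_continuous_interval continuous_on_ff ff_small continuous_on_const)
       (use K in auto)
  thus ?thesis using K by simp
qed

lemma fer_M_cont: "continuous_on {0..b} fer_M"
  unfolding fer_M_ff
  by (intro indefinite_integral_continuous_1 integrable_continuous_interval continuous_on_ff)

lemma fer_M_deriv: "y \<in> {0..b} \<Longrightarrow> (fer_M has_vector_derivative ff y) (at y within {0..b})"
  unfolding fer_M_ff[abs_def]
  by (intro integral_has_vector_derivative continuous_on_ff)

lemma gronwall:
  fixes u :: "real \<Rightarrow> real"
  assumes x: "0 \<le> x" and cont: "continuous_on {0..x} u" and L: "0 \<le> L"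
    and hyp: "\<And>s. s \<in> {0..x} \<Longrightarrow> u s \<le> c + L * integral {0..s} u"
  shows "u x \<le> c * exp (L * x)"
proof -
  define w where "w = (\<lambda>s. integral {0..s} u)"
  define \<phi> where "\<phi> = (\<lambda>s. exp (- (L * s)) * (c + L * w s))"
  define \<phi>' where "\<phi>' = (\<lambda>s. exp (- (L * s)) * (- (L * 1)) * (c + L * w s) + exp (- (L * s)) * (L * u s))"
  have "(\<phi>' has_integral (\<phi> x - \<phi> 0)) {0..x}"
  proof (rule fundamental_theorem_of_calculus[OF x])
    fix s assume s: "s \<in> {0..x}"
    have "(w has_vector_derivative u s) (at s within {0..x})"
      unfolding w_def by (rule integral_has_vector_derivative[OF cont s])
    hence wd: "(w has_real_derivative u s) (at s within {0..x})"
      by (simp only: has_real_derivative_iff_has_vector_derivative)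
    have "(\<phi> has_real_derivative \<phi>' s) (at s within {0..x})"
      unfolding \<phi>_def \<phi>'_def using wd by (auto intro!: derivative_eq_intros)
    thus "(\<phi> has_vector_derivative \<phi>' s) (at s within {0..x})"
      by (simp add: has_real_derivative_iff_has_vector_derivative)
  qed
  moreover have "((\<lambda>s. 0) has_integral 0) {0..x}" by simp
  moreover have "\<phi>' s \<le> 0" if "s \<in> {0..x}" for s
  proof -
    have "\<phi>' s = exp (- (L * s)) * L * (u s - c - L * w s)" by (simp add: \<phi>'_def algebra_simps)
    moreover have "u s - c - L * w s \<le> 0" using hyp[OF that] by (simp add: w_def)
    ultimately show ?thesis using L by (simp add: mult_nonneg_nonpos)
  qed
  ultimately have "\<phi> x - \<phi> 0 \<le> 0" by (rule has_integral_le)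
  hence "exp (- (L * x)) * (c + L * w x) \<le> c" by (simp add: \<phi>_def w_def)
  hence "c + L * w x \<le> c * exp (L * x)"
    by (simp add: exp_minus field_simps)
  moreover have "u x \<le> c + L * w x" using hyp[of x] x by (simp add: w_def)
  ultimately show ?thesis by simp
qed

lemma mexp_zero: "mexp (0::'m::finite cmat) = mat 1"
  by (simp add: mexp_Rep zero_mM_def[symmetric] Rep_mM_one)

lemma cont_mmR: "continuous_on S (f::'a::topological_space \<Rightarrow> 'm::finite cmat) \<Longrightarrow> continuous_on S (\<lambda>x. f x ** (B::'m::finite cmat))"
  by (rule bounded_bilinear.continuous_on[OF bbil_mm _ continuous_on_const])

lemma cont_mmL: "continuous_on S (f::'a::topological_space \<Rightarrow> 'm::finite cmat) \<Longrightarrow> continuous_on S (\<lambda>x. (B::'m::finite cmat) ** f x)"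
  by (rule bounded_bilinear.continuous_on[OF bbil_mm continuous_on_const])

context
  fixes N :: "'m::finite cmat \<Rightarrow> real"
  assumes SN: "submult_matrix_norm N"
begin

lemma N_ad: "N (Z ** F - F ** Z) \<le> 2 * N Z * N F"
proof -
  have "N (Z ** F - F ** Z) \<le> N (Z ** F) + N (F ** Z)" by (rule N_triangle_diff[OF SN])
  also have "\<dots> \<le> N Z * N F + N F * N Z" by (intro add_mono N_mult[OF SN])
  finally show ?thesis by (simp add: ac_simps)
qed

lemma fer_step:
  fixes F Y :: "'m cmat"
  assumes KF: "N F \<le> K"
  shows "N (mexp (- F) ** Y ** mexp F - integral {0..1} (\<lambda>x. mexp (- (x *\<^sub>R F)) ** Y ** mexp (x *\<^sub>R F)))
     \<le> N Y * ff K"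
proof -
  define \<psi> where "\<psi> = (\<lambda>x::real. mexp (- (x *\<^sub>R F)) ** Y ** mexp (x *\<^sub>R F))"
  define \<psi>' where "\<psi>' = (\<lambda>x. \<psi> x ** F - F ** \<psi> x)"
  define k where "k = N F"
  have k0: "0 \<le> k" by (simp add: k_def N_nonneg[OF SN])
  have kK: "k \<le> K" using KF by (simp add: k_def)
  have dpsi: "(\<psi> has_vector_derivative \<psi>' x) (at x within S)" for x S
    unfolding \<psi>_def \<psi>'_def by (rule psi_deriv)
  have cpsi: "continuous_on S \<psi>" for S
    using dpsi by (rule continuous_on_vector_derivative)
  have cpsi': "continuous_on S \<psi>'" for S
    unfolding \<psi>'_def by (intro continuous_on_diff cont_mmR cont_mmL cpsi)
  have psi0: "\<psi> 0 = Y" by (simp add: \<psi>_def mexp_zero)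
  have psi1: "\<psi> 1 = mexp (- F) ** Y ** mexp F" by (simp add: \<psi>_def)
  have Nad: "N (\<psi>' x) \<le> 2 * k * N (\<psi> x)" for x
    using N_ad[of "\<psi> x" F] by (simp add: \<psi>'_def k_def ac_simps)
  have bound: "N (\<psi> x) \<le> N Y * exp (2 * k * x)" if x: "0 \<le> x" for x
  proof -
    have "N (\<psi> x) \<le> N Y * exp ((2 * k) * x)"
    proof (rule gronwall[OF x])
      show "continuous_on {0..x} (\<lambda>s. N (\<psi> s))"
        by (rule continuous_on_compose2[OF N_cont[OF SN] cpsi subset_UNIV])
      show "0 \<le> 2 * k" using k0 by simp
      fix s assume s: "s \<in> {0..x}"
      have "(\<psi>' has_integral (\<psi> s - \<psi> 0)) {0..s}"
        using s by (intro fundamental_theorem_of_calculus dpsi) auto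
      hence eq: "\<psi> s - Y = integral {0..s} \<psi>'" and ii: "\<psi>' integrable_on {0..s}"
        by (auto simp: psi0 integral_unique)
      have cN: "continuous_on {0..s} (\<lambda>r. N (\<psi> r))"
        by (rule continuous_on_compose2[OF N_cont[OF SN] cpsi subset_UNIV])
      have cN': "continuous_on {0..s} (\<lambda>r. N (\<psi>' r))"
        by (rule continuous_on_compose2[OF N_cont[OF SN] cpsi' subset_UNIV])
      have "N (\<psi> s) \<le> N Y + N (\<psi> s - Y)"
        using N_triangle[OF SN, of Y "\<psi> s - Y"] by simp
      also have "N (\<psi> s - Y) \<le> integral {0..s} (\<lambda>r. N (\<psi>' r))"
        unfolding eq by (rule N_integral[OF SN ii integrable_continuous_interval[OF cN']])
      also have "\<dots> \<le> integral {0..s} (\<lambda>r. (2 * k) * N (\<psi> r))"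
        by (intro integral_le integrable_continuous_interval cN' continuous_on_mult continuous_on_const cN Nad)
      also have "\<dots> = (2 * k) * integral {0..s} (\<lambda>r. N (\<psi> r))"
        using integral_cmul[where c="2 * k" and f="\<lambda>r. N (\<psi> r)" and S="{0..s}"] by simp
      finally show "N (\<psi> s) \<le> N Y + 2 * k * integral {0..s} (\<lambda>s. N (\<psi> s))" by simp
    qed
    thus ?thesis by simp
  qed
  \<comment> \<open>integration by parts\<close>
  have "((\<lambda>x. x *\<^sub>R \<psi>' x + 1 *\<^sub>R \<psi> x) has_integral ((\<lambda>x. x *\<^sub>R \<psi> x) 1 - (\<lambda>x. x *\<^sub>R \<psi> x) 0)) {0..1}"
    by (intro fundamental_theorem_of_calculus has_vector_derivative_scaleR dpsi derivative_eq_intros) auto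
  hence "((\<lambda>x. x *\<^sub>R \<psi>' x + \<psi> x) has_integral \<psi> 1) {0..1}" by simp
  moreover have "(\<psi> has_integral integral {0..1} \<psi>) {0..1}"
    by (intro integrable_integral integrable_continuous_interval cpsi)
  ultimately have "((\<lambda>x. (x *\<^sub>R \<psi>' x + \<psi> x) - \<psi> x) has_integral (\<psi> 1 - integral {0..1} \<psi>)) {0..1}"
    by (rule has_integral_diff)
  hence ibp: "((\<lambda>x. x *\<^sub>R \<psi>' x) has_integral (\<psi> 1 - integral {0..1} \<psi>)) {0..1}" by simp
  have cg: "continuous_on {0..1} (\<lambda>x. N (x *\<^sub>R \<psi>' x))"
    by (intro continuous_on_compose2[OF N_cont[OF SN] _ subset_UNIV] continuous_on_scaleR
        continuous_on_id cpsi')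
  have "N (\<psi> 1 - integral {0..1} \<psi>) = N (integral {0..1} (\<lambda>x. x *\<^sub>R \<psi>' x))"
    using ibp by (simp add: integral_unique)
  also have "\<dots> \<le> integral {0..1} (\<lambda>x. N (x *\<^sub>R \<psi>' x))"
    by (rule N_integral[OF SN has_integral_integrable[OF ibp] integrable_continuous_interval[OF cg]])
  also have "\<dots> \<le> integral {0..1} (\<lambda>x. N Y * (2 * K * x * exp (2 * K * x)))"
  proof (rule integral_le)
    show "(\<lambda>x. N (x *\<^sub>R \<psi>' x)) integrable_on {0..1}" by (intro integrable_continuous_interval cg)
    show "(\<lambda>x. N Y * (2 * K * x * exp (2 * K * x))) integrable_on {0..1}"
      by (intro integrable_continuous_interval continuous_intros)
    fix x :: real assume "x \<in> {0..1}"
    hence x: "0 \<le> x" by simp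
    have "N (x *\<^sub>R \<psi>' x) = x * N (\<psi>' x)" using x by (simp add: N_scaleR[OF SN])
    also have "\<dots> \<le> x * (2 * k * N (\<psi> x))" using x Nad by (intro mult_left_mono) auto
    also have "\<dots> \<le> x * (2 * K * (N Y * exp (2 * K * x)))"
    proof -
      have "exp (2 * k * x) \<le> exp (2 * K * x)" using kK x by (simp add: mult_right_mono)
      hence p: "N (\<psi> x) \<le> N Y * exp (2 * K * x)"
        using bound[OF x] N_nonneg[OF SN, of Y] by (meson mult_left_mono order_trans)
      have "2 * k * N (\<psi> x) \<le> 2 * K * (N Y * exp (2 * K * x))"
        by (rule mult_mono) (use kK p k0 N_nonneg[OF SN] in auto)
      thus ?thesis using x by (rule mult_left_mono)
    qed
    finally show "N (x *\<^sub>R \<psi>' x) \<le> N Y * (2 * K * x * exp (2 * K * x))" by (simp add: algebra_simps)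
  qed
  also have "\<dots> = N Y * ff K"
  proof -
    have "0 \<le> K" using k0 kK by simp
    from has_integral_mult_right[OF ff_has_integral[OF this], of "N Y"]
    show ?thesis by (rule integral_unique)
  qed
  finally show ?thesis by (simp add: psi1 \<psi>_def)
qed

end

lemma fer_xi_le: "0 < K \<Longrightarrow> fer_M K = K \<Longrightarrow> fer_xi \<le> K"
  unfolding fer_xi_def
  by (rule cInf_lower) (auto simp: bdd_below_def intro!: exI[of _ 0])

lemma fer_M_below: assumes "0 < K" "K < fer_xi" shows "fer_M K < K"
proof (rule ccontr)
  assume "\<not> fer_M K < K"
  hence ge: "K \<le> fer_M K" by simp
  show False
  proof (cases "K \<le> 1/8")
    case True
    thus False using fer_M_small[of K] assms ge by simp
  next
    case False
    have c: "continuous_on {1/8..K} (\<lambda>x. fer_M x - x)"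
      by (intro continuous_on_diff continuous_on_id continuous_on_subset[OF fer_M_cont[of K]]) auto
    have "fer_M (1/8) - 1/8 \<le> 0" using fer_M_small[of "1/8"] by simp
    moreover have "0 \<le> fer_M K - K" using ge by simp
    ultimately obtain x where x: "1/8 \<le> x" "x \<le> K" "fer_M x - x = 0"
      using IVT'[of "\<lambda>x. fer_M x - x" "1/8" 0 K, OF _ _ _ c] False by auto
    hence "fer_xi \<le> x" using fer_xi_le[of x] by simp
    thus False using x assms by simp
  qed
qed

lemma fer_M_le: "0 \<le> K \<Longrightarrow> K < fer_xi \<Longrightarrow> fer_M K \<le> K"
  using fer_M_below[of K] by (cases "K = 0") auto

lemma fer_M_iter_tendsto:
  assumes k: "0 \<le> k" "k < fer_xi"
  shows "(\<lambda>n. (fer_M ^^ n) k) \<longlonglongrightarrow> 0"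
proof -
  define s where "s = (\<lambda>n. (fer_M ^^ n) k)"
  have inv: "0 \<le> s n \<and> s n \<le> k" for n
  proof (induction n)
    case 0 thus ?case using k by (simp add: s_def)
  next
    case (Suc n)
    have "s (Suc n) = fer_M (s n)" by (simp add: s_def)
    moreover have "fer_M (s n) \<le> s n" using Suc k by (intro fer_M_le) auto
    ultimately show ?case using Suc fer_M_nonneg[of "s n"] by simp
  qed
  have dec: "decseq s"
  proof (rule decseq_SucI)
    fix n
    have "s (Suc n) = fer_M (s n)" by (simp add: s_def)
    thus "s (Suc n) \<le> s n" using inv[of n] k fer_M_le[of "s n"] by simp
  qed
  obtain L where L: "s \<longlonglongrightarrow> L" "\<forall>i. L \<le> s i"
    using decseq_convergent[OF dec, of 0] inv by blast
  have L0: "0 \<le> L" using L(1) inv by (intro LIMSEQ_le_const) auto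
  have Lk: "L \<le> k" using L(2) inv[of 0] by (metis order_trans)
  have "(\<lambda>n. fer_M (s n)) \<longlonglongrightarrow> fer_M L"
    using L0 Lk inv by (intro continuous_on_tendsto_compose[OF fer_M_cont[of k] L(1)]) auto
  moreover have "(\<lambda>n. fer_M (s n)) = (\<lambda>n. s (Suc n))" by (simp add: s_def fun_eq_iff)
  moreover have "(\<lambda>n. s (Suc n)) \<longlonglongrightarrow> L" using L(1) by (rule LIMSEQ_Suc)
  ultimately have "fer_M L = L" using LIMSEQ_unique by metis
  hence "L = 0" using fer_M_below[of L] L0 Lk k by fastforce
  thus ?thesis using L(1) by (simp add: s_def)
qed

lemma cont_mm[continuous_intros]:
  "continuous_on S (f::'a::topological_space \<Rightarrow> 'm::finite cmat) \<Longrightarrow> continuous_on S (g::'a \<Rightarrow> 'm cmat) \<Longrightarrow>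
   continuous_on S (\<lambda>x. f x ** g x)"
  by (rule bounded_bilinear.continuous_on[OF bbil_mm])

lemma fer_A_Suc_eq:
  "fer_A A (Suc n) t = mexp (- integral {0..t} (fer_A A n)) ** fer_A A n t ** mexp (integral {0..t} (fer_A A n))
     - integral {0..1} (\<lambda>x. mexp (- (x *\<^sub>R integral {0..t} (fer_A A n))) ** fer_A A n t ** mexp (x *\<^sub>R integral {0..t} (fer_A A n)))"
  by (simp add: Let_def)

lemma fer_A_cont:
  assumes "continuous_on {0..T} A"
  shows "continuous_on {0..T} (fer_A A n)"
proof (induction n)
  case 0 thus ?case using assms by simp
next
  case (Suc n)
  define X where "X = fer_A A n"
  define F where "F = (\<lambda>t. integral {0..t} X)"
  have cX: "continuous_on {0..T} X" using Suc by (simp add: X_def)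
  have cF: "continuous_on {0..T} F"
    unfolding F_def by (intro indefinite_integral_continuous_1 integrable_continuous_interval cX)
  have eq: "fer_A A (Suc n) = (\<lambda>t. mexp (- F t) ** X t ** mexp (F t)
     - integral (cbox 0 1) (\<lambda>x. mexp (- (x *\<^sub>R F t)) ** X t ** mexp (x *\<^sub>R F t)))"
    by (simp add: fun_eq_iff Let_def X_def F_def cbox_interval)
  have cF': "continuous_on ({0..T} \<times> cbox 0 1) (\<lambda>p. F (fst p))"
    by (rule continuous_on_compose2[OF cF continuous_on_fst]) auto
  have cX': "continuous_on ({0..T} \<times> cbox 0 1) (\<lambda>p. X (fst p))"
    by (rule continuous_on_compose2[OF cX continuous_on_fst]) auto
  have "continuous_on ({0..T} \<times> cbox 0 1)
      (\<lambda>p. mexp (- (snd p *\<^sub>R F (fst p))) ** X (fst p) ** mexp (snd p *\<^sub>R F (fst p)))"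
    by (intro continuous_intros cF' cX')
  hence "continuous_on ({0..T} \<times> cbox 0 1)
      (\<lambda>(t, x). mexp (- (x *\<^sub>R F t)) ** X t ** mexp (x *\<^sub>R F t))"
    by (simp add: case_prod_beta)
  hence ci: "continuous_on {0..T} (\<lambda>t. integral (cbox 0 1) (\<lambda>x. mexp (- (x *\<^sub>R F t)) ** X t ** mexp (x *\<^sub>R F t)))"
    by (rule integral_continuous_on_param)
  show ?case unfolding eq by (intro continuous_intros cF cX ci)
qed

context
  fixes N :: "'m::finite cmat \<Rightarrow> real"
  assumes SN: "submult_matrix_norm N"
begin

lemma fer_int_step:
  fixes X :: "real \<Rightarrow> 'm cmat" and T t :: real
  assumes cX: "continuous_on {0..T} X" and cY: "continuous_on {0..T} Y" and t: "t \<in> {0..T}"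
    and Yeq: "\<And>s. s \<in> {0..T} \<Longrightarrow> Y s = mexp (- integral {0..s} X) ** X s ** mexp (integral {0..s} X)
     - integral {0..1} (\<lambda>x. mexp (- (x *\<^sub>R integral {0..s} X)) ** X s ** mexp (x *\<^sub>R integral {0..s} X))"
  shows "integral {0..t} (\<lambda>s. N (Y s)) \<le> fer_M (integral {0..t} (\<lambda>s. N (X s)))"
proof -
  define k where "k = (\<lambda>s. integral {0..s} (\<lambda>r. N (X r)))"
  have T: "0 \<le> t" "t \<le> T" using t by auto
  have cNX: "continuous_on {0..T} (\<lambda>s. N (X s))"
    by (rule continuous_on_compose2[OF N_cont[OF SN] cX subset_UNIV])
  have cNY: "continuous_on {0..T} (\<lambda>s. N (Y s))"
    by (rule continuous_on_compose2[OF N_cont[OF SN] cY subset_UNIV])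
  have ck: "continuous_on {0..T} k"
    unfolding k_def by (intro indefinite_integral_continuous_1 integrable_continuous_interval cNX)
  have k0: "0 \<le> k s" if "s \<in> {0..T}" for s
    unfolding k_def using that
    by (intro integral_nonneg integrable_continuous_interval continuous_on_subset[OF cNX]
        N_nonneg[OF SN]) auto
  have kmono: "k s \<le> k t" if "s \<in> {0..t}" for s
  proof -
    have i: "(\<lambda>r. N (X r)) integrable_on {0..t}"
      using T by (intro integrable_continuous_interval continuous_on_subset[OF cNX]) auto
    have "k t = k s + integral {s..t} (\<lambda>r. N (X r))"
      unfolding k_def using Henstock_Kurzweil_Integration.integral_combine[OF _ _ i, of s] that by simp
    moreover have "0 \<le> integral {s..t} (\<lambda>r. N (X r))"
      using that T by (intro integral_nonneg integrable_continuous_interval continuous_on_subset[OF cNX]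
          N_nonneg[OF SN]) auto
    ultimately show ?thesis by simp
  qed
  have pw: "N (Y s) \<le> N (X s) * ff (k s)" if s: "s \<in> {0..T}" for s
  proof -
    have "N (integral {0..s} X) \<le> k s"
      unfolding k_def using s
      by (intro N_integral[OF SN] integrable_continuous_interval continuous_on_subset[OF cX]
          continuous_on_subset[OF cNX]) auto
    from fer_step[OF SN this, of "X s"] show ?thesis using Yeq[OF s] by simp
  qed
  have "integral {0..t} (\<lambda>s. N (Y s)) \<le> integral {0..t} (\<lambda>s. N (X s) * ff (k s))"
  proof (rule integral_le)
    show "(\<lambda>s. N (Y s)) integrable_on {0..t}"
      using T by (intro integrable_continuous_interval continuous_on_subset[OF cNY]) auto
    show "(\<lambda>s. N (X s) * ff (k s)) integrable_on {0..t}"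
      using T by (intro integrable_continuous_interval continuous_on_mult continuous_on_subset[OF cNX]
          continuous_on_compose2[OF continuous_on_ff continuous_on_subset[OF ck]]) auto
  qed (use pw T in auto)
  also have "\<dots> = fer_M (k t)"
  proof -
    have "((\<lambda>s. N (X s) * ff (k s)) has_integral ((fer_M \<circ> k) t - (fer_M \<circ> k) 0)) {0..t}"
    proof (rule fundamental_theorem_of_calculus[OF T(1)])
      fix s assume s: "s \<in> {0..t}"
      have dk: "(k has_vector_derivative N (X s)) (at s within {0..t})"
        unfolding k_def using s T
        by (intro integral_has_vector_derivative continuous_on_subset[OF cNX]) auto
      have "k s \<in> {0..k t}" using k0[of s] kmono[OF s] s T by auto
      hence "(fer_M has_vector_derivative ff (k s)) (at (k s) within {0..k t})"
        by (rule fer_M_deriv)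
      moreover have "k ` {0..t} \<subseteq> {0..k t}" using k0 kmono T by auto
      ultimately have "(fer_M has_vector_derivative ff (k s)) (at (k s) within k ` {0..t})"
        by (rule has_vector_derivative_within_subset)
      from vector_diff_chain_within[OF dk this]
      show "((fer_M \<circ> k) has_vector_derivative N (X s) * ff (k s)) (at s within {0..t})" by simp
    qed
    moreover have "k 0 = 0" by (simp add: k_def)
    ultimately show ?thesis by (simp add: integral_unique)
  qed
  finally show ?thesis by (simp add: k_def)
qed

end

theorem mainTheorem12:
  fixes A :: "real \<Rightarrow> 'm::finite cmat" and T :: real and N :: "'m cmat \<Rightarrow> real"
  assumes "continuous_on {0..T} A"
    and "submult_matrix_norm N"
  shows "(\<forall>n t. t \<in> {0..T} \<longrightarrow>
            integral {0..t} (\<lambda>s. N (fer_A A n s)) \<le> (fer_M ^^ n) (integral {0..t} (\<lambda>s. N (A s))))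
       \<and> (\<forall>n t. t \<in> {0..T} \<longrightarrow>
            N (fer_F A (Suc n) t) \<le> (fer_M ^^ n) (integral {0..t} (\<lambda>s. N (A s))))
       \<and> (\<forall>t. t \<in> {0..T} \<longrightarrow> integral {0..t} (\<lambda>s. N (A s)) < fer_xi \<longrightarrow>
            ((\<lambda>n. (fer_M ^^ n) (integral {0..t} (\<lambda>s. N (A s)))) \<longlonglongrightarrow> 0)
          \<and> ((\<lambda>n. fer_F A n t) \<longlonglongrightarrow> 0))"
proof -
  note cA = assms(1) and SN = assms(2)
  have cont: "continuous_on {0..T} (fer_A A n)" for n by (rule fer_A_cont[OF cA])
  have P1: "integral {0..t} (\<lambda>s. N (fer_A A n s)) \<le> (fer_M ^^ n) (integral {0..t} (\<lambda>s. N (A s)))"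
    if t: "t \<in> {0..T}" for n t
  proof (induction n)
    case 0 thus ?case by simp
  next
    case (Suc n)
    have "integral {0..t} (\<lambda>s. N (fer_A A (Suc n) s)) \<le> fer_M (integral {0..t} (\<lambda>s. N (fer_A A n s)))"
      by (rule fer_int_step[OF SN cont cont t]) (simp add: Let_def)
    also have "\<dots> \<le> fer_M ((fer_M ^^ n) (integral {0..t} (\<lambda>s. N (A s))))"
    proof (rule fer_M_mono[OF _ Suc])
      show "0 \<le> integral {0..t} (\<lambda>s. N (fer_A A n s))"
        using t by (intro integral_nonneg integrable_continuous_interval N_nonneg[OF SN]
            continuous_on_compose2[OF N_cont[OF SN] continuous_on_subset[OF cont] subset_UNIV]) auto
    qed
    finally show ?case by simp
  qed
  have P2: "N (fer_F A (Suc n) t) \<le> (fer_M ^^ n) (integral {0..t} (\<lambda>s. N (A s)))"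
    if t: "t \<in> {0..T}" for n t
  proof -
    have "N (fer_F A (Suc n) t) \<le> integral {0..t} (\<lambda>s. N (fer_A A n s))"
      using t by (simp only: fer_F.simps)
        (intro N_integral[OF SN] integrable_continuous_interval continuous_on_subset[OF cont]
          continuous_on_compose2[OF N_cont[OF SN] continuous_on_subset[OF cont] subset_UNIV], auto)
    also have "\<dots> \<le> (fer_M ^^ n) (integral {0..t} (\<lambda>s. N (A s)))" by (rule P1[OF t])
    finally show ?thesis .
  qed
  have P3: "((\<lambda>n. (fer_M ^^ n) (integral {0..t} (\<lambda>s. N (A s)))) \<longlonglongrightarrow> 0)
          \<and> ((\<lambda>n. fer_F A n t) \<longlonglongrightarrow> 0)"
    if t: "t \<in> {0..T}" and lt: "integral {0..t} (\<lambda>s. N (A s)) < fer_xi" for t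
  proof
    have nn: "0 \<le> integral {0..t} (\<lambda>s. N (A s))"
      using t by (intro integral_nonneg integrable_continuous_interval N_nonneg[OF SN]
          continuous_on_compose2[OF N_cont[OF SN] continuous_on_subset[OF cA] subset_UNIV]) auto
    show lim: "(\<lambda>n. (fer_M ^^ n) (integral {0..t} (\<lambda>s. N (A s)))) \<longlonglongrightarrow> 0"
      by (rule fer_M_iter_tendsto[OF nn lt])
    obtain c where c: "c > 0" "\<And>X. c * norm X \<le> N X" using N_ge_norm[OF SN] by blast
    have "(\<lambda>n. fer_F A (Suc n) t) \<longlonglongrightarrow> 0"
    proof (rule Lim_null_comparison)
      show "\<forall>\<^sub>F n in sequentially. norm (fer_F A (Suc n) t) \<le> (fer_M ^^ n) (integral {0..t} (\<lambda>s. N (A s))) / c"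
      proof (rule always_eventually, rule allI)
        fix n
        have "c * norm (fer_F A (Suc n) t) \<le> (fer_M ^^ n) (integral {0..t} (\<lambda>s. N (A s)))"
          using c(2) P2[OF t] order_trans by blast
        thus "norm (fer_F A (Suc n) t) \<le> (fer_M ^^ n) (integral {0..t} (\<lambda>s. N (A s))) / c"
          using c(1) by (simp add: field_simps)
      qed
      show "(\<lambda>n. (fer_M ^^ n) (integral {0..t} (\<lambda>s. N (A s))) / c) \<longlonglongrightarrow> 0"
        using tendsto_divide[OF lim tendsto_const, of c] c(1) by simp
    qed
    thus "(\<lambda>n. fer_F A n t) \<longlonglongrightarrow> 0" by (rule LIMSEQ_imp_Suc)
  qed
  show ?thesis using P1 P2 P3 by blast
qed

end
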